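(* Let $H_1,\dots,H_K$ be half spaces in $\mathbb{R}^n$ such that the sets $H_i\cap B_2$, $i=1,\dots,K$, are pairwise disjoint. Then at most two of the half spaces $H_i$ intersect $B_1$.
   Context: $B_r$ denotes the open ball of radius $r$ centered at the origin in $\mathbb{R}^n$. *)

theory Defs
  imports "HOL-Analysis.Analysis"
begin

definition halfspace :: "'a::euclidean_space set \<Rightarrow> bool" where
  "halfspace H \<longleftrightarrow> (\<exists>a b. a \<noteq> 0 \<and> H = {x. inner a x \<le> b})"

end

theory Submission
  imports Defs
begin

lemma hs_normal:
  fixes H :: "'a::euclidean_space set"
  assumes "halfspace H" "H \<inter> ball 0 1 \<noteq> {}"
  shows "\<exists>u \<beta>. norm u = 1 \<and> \<beta> < 1 \<and> H = {x. inner u x \<le> - \<beta>}"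
proof -
  obtain a b where ab: "a \<noteq> 0" "H = {x. inner a x \<le> b}" using assms(1) halfspace_def by blast
  obtain p where p: "inner a p \<le> b" "norm p < 1" using assms(2) ab by auto
  have na: "norm a > 0" using ab by simp
  have "- inner a p \<le> norm a * norm p"
    by (metis Cauchy_Schwarz_ineq2 abs_le_iff inner_minus_left inner_commute) 
  also have "\<dots> < norm a" using p na by simp
  finally have lt: "- b < norm a" using p by linarith
  define u where "u = a /\<^sub>R norm a"
  define \<beta> where "\<beta> = - b / norm a"
  have "norm u = 1" using na u_def by simp
  moreover have "\<beta> < 1" unfolding \<beta>_def using lt na by (simp add: less_divide_eq minus_divide_left[symmetric])
  moreover have "H = {x. inner u x \<le> - \<beta>}"
  proof -
    have "\<And>x. inner u x \<le> - \<beta> \<longleftrightarrow> inner a x \<le> b"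
      unfolding u_def \<beta>_def using ab(1) by (simp add: field_simps)
    then show ?thesis using ab(2) by auto
  qed
  ultimately show ?thesis by blast
qed

lemma pair_angle:
  fixes u v :: "'a::euclidean_space"
  assumes "norm u = 1" "norm v = 1" "\<beta>1 < 1" "\<beta>2 < 1"
    and "\<And>x. norm x < 2 \<Longrightarrow> \<not> (inner u x \<le> - \<beta>1 \<and> inner v x \<le> - \<beta>2)"
  shows "inner u v < - 1/2"
proof (rule ccontr)
  assume "\<not> inner u v < - 1/2"
  hence g: "inner u v \<ge> -1/2" by simp
  define \<beta> where "\<beta> = max \<beta>1 \<beta>2"
  have b1: "\<beta> < 1" using assms \<beta>_def by simp
  show False
  proof (cases "\<beta> \<le> 0")
    case True
    then show ?thesis using assms(5)[of 0] \<beta>_def by simp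
  next
    case False
    define \<gamma> where "\<gamma> = inner u v"
    have gp: "1 + \<gamma> > 0" using g \<gamma>_def by simp
    define x where "x = - (\<beta> / (1+\<gamma>)) *\<^sub>R (u + v)"
    have uu: "inner u u = 1" "inner v v = 1" using assms(1,2)
      by (simp_all add: power2_norm_eq_inner[symmetric])
    have "inner u x = - \<beta>"
    proof -
      have "inner u x = - (\<beta> / (1+\<gamma>)) * (inner u u + inner u v)"
        unfolding x_def by (simp add: inner_add_right)
      also have "\<dots> = - (\<beta> / (1+\<gamma>)) * (1+\<gamma>)" using uu by (simp add: \<gamma>_def)
      also have "\<dots> = - \<beta>" using gp by simp
      finally show ?thesis .
    qed
    moreover have "inner v x = - \<beta>"
    proof -
      have "inner v x = - (\<beta> / (1+\<gamma>)) * (inner v u + inner v v)"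
        unfolding x_def by (simp add: inner_add_right)
      also have "\<dots> = - (\<beta> / (1+\<gamma>)) * (1+\<gamma>)" using uu by (simp add: \<gamma>_def inner_commute add.commute)
      also have "\<dots> = - \<beta>" using gp by simp
      finally show ?thesis .
    qed
    moreover have "(norm x)^2 = 2 * \<beta>^2 / (1+\<gamma>)"
    proof -
      have "(norm x)^2 = (\<beta> / (1+\<gamma>))^2 * inner (u+v) (u+v)"
        unfolding power2_norm_eq_inner x_def by (simp add: power2_eq_square)
      also have "inner (u+v) (u+v) = 2 * (1+\<gamma>)" using uu
        by (simp add: inner_add_right inner_add_left \<gamma>_def inner_commute)
      also have "(\<beta> / (1+\<gamma>))^2 * (2 * (1+\<gamma>)) = 2 * \<beta>^2 / (1+\<gamma>)"
        using gp by (simp add: power2_eq_square divide_simps)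
      finally show ?thesis .
    qed
    moreover have "2 * \<beta>^2 / (1+\<gamma>) \<le> 4 * \<beta>^2"
    proof -
      have "\<beta>^2 * 1 \<le> \<beta>^2 * (2*(1+\<gamma>))"
        by (rule mult_left_mono) (use g \<gamma>_def in auto)
      then show ?thesis using gp by (simp add: divide_le_eq algebra_simps)
    qed
    moreover have "4 * \<beta>^2 < 4" using b1 False
    proof -
      have "\<beta> * \<beta> < 1 * 1" using b1 False by (intro mult_strict_mono) auto
      then show ?thesis by (simp add: power2_eq_square)
    qed
    ultimately have "(norm x)^2 < 2^2" "inner u x \<le> - \<beta>1" "inner v x \<le> - \<beta>2"
      using \<beta>_def by auto
    then show False using assms(5)[of x] by (meson abs_norm_cancel power2_less_imp_less zero_le_numeral)
  qed
qed

lemma three_units: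
  fixes u v w :: "'a::euclidean_space"
  assumes "norm u = 1" "norm v = 1" "norm w = 1"
    "inner u v < -1/2" "inner u w < -1/2" "inner v w < -1/2"
  shows False
proof -
  have uu: "inner u u = 1" "inner v v = 1" "inner w w = 1" using assms(1-3)
      by (simp_all add: power2_norm_eq_inner[symmetric])
  have "0 \<le> inner (u+v+w) (u+v+w)" by simp
  also have "\<dots> = 3 + 2*(inner u v + inner u w + inner v w)"
    using uu by (simp add: inner_add_right inner_add_left inner_commute)
  finally have "0 \<le> 3 + 2*(inner u v + inner u w + inner v w)" .
  moreover have "inner u v + inner u w + inner v w < -3/2" using assms(4-6) by simp
  ultimately show False by simp
qed

theorem lemma4p9:
  fixes H :: "nat \<Rightarrow> 'a::euclidean_space set" and K :: nat
  assumes "\<forall>i\<in>{1..K}. halfspace (H i)"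
    and "\<forall>i\<in>{1..K}. \<forall>j\<in>{1..K}. i \<noteq> j \<longrightarrow>
           (H i \<inter> ball 0 2) \<inter> (H j \<inter> ball 0 2) = {}"
  shows "card {i\<in>{1..K}. H i \<inter> ball 0 1 \<noteq> {}} \<le> 2"
proof (rule ccontr)
  define S where "S = {i\<in>{1..K}. H i \<inter> ball 0 1 \<noteq> {}}"
  assume "\<not> card {i\<in>{1..K}. H i \<inter> ball 0 1 \<noteq> {}} \<le> 2"
  hence "2 < card S" using S_def by simp
  then obtain i j k where ijk: "i \<in> S" "j \<in> S" "k \<in> S" "i \<noteq> j" "i \<noteq> k" "j \<noteq> k"
  proof -
    have "Suc (Suc (Suc 0)) \<le> card S" using \<open>2 < card S\<close> by simp
    then have "\<exists>a B. S = insert a B \<and> a \<notin> B \<and> Suc (Suc 0) \<le> card B \<and> finite B"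
      by (rule iffD1[OF card_le_Suc_iff])
    then obtain a B where aB: "S = insert a B" "a \<notin> B" "Suc (Suc 0) \<le> card B"
      by (elim exE conjE)
    from aB(3) have "\<exists>a B'. B = insert a B' \<and> a \<notin> B' \<and> Suc 0 \<le> card B' \<and> finite B'"
      by (rule iffD1[OF card_le_Suc_iff])
    then obtain b C where bC: "B = insert b C" "b \<notin> C" "Suc 0 \<le> card C"
      by (elim exE conjE)
    from bC(3) have "\<exists>a B'. C = insert a B' \<and> a \<notin> B' \<and> 0 \<le> card B' \<and> finite B'"
      by (rule iffD1[OF card_le_Suc_iff])
    then obtain c D where cD: "C = insert c D" "c \<notin> D"
      by (elim exE conjE)
    show ?thesis by (rule that[of a b c]) (use aB bC cD in auto)
  qed
  have N: "\<exists>u \<beta>. norm u = 1 \<and> \<beta> < 1 \<and> H m = {x. inner u x \<le> - \<beta>}" if "m \<in> S" for m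
  proof -
    have "m \<in> {1..K}" "H m \<inter> ball 0 1 \<noteq> {}" using that unfolding S_def by auto
    then show ?thesis using hs_normal[of "H m"] assms(1) by blast
  qed
  obtain ui bi where i: "norm ui = 1" "bi < 1" "H i = {x. inner ui x \<le> - bi}" using N[OF ijk(1)] by blast
  obtain uj bj where j: "norm uj = 1" "bj < 1" "H j = {x. inner uj x \<le> - bj}" using N[OF ijk(2)] by blast
  obtain uk bk where k: "norm uk = 1" "bk < 1" "H k = {x. inner uk x \<le> - bk}" using N[OF ijk(3)] by blast
  have D: "\<not> (x \<in> H m \<and> x \<in> H n)" if "m \<in> S" "n \<in> S" "m \<noteq> n" "norm x < 2" for m n x
  proof -
    have "m \<in> {1..K}" "n \<in> {1..K}" using that unfolding S_def by auto
    then have E: "(H m \<inter> ball 0 2) \<inter> (H n \<inter> ball 0 2) = {}" using assms(2) that(3) by blast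
    have "x \<in> ball 0 2" using that(4) by simp
    then show ?thesis using E by blast
  qed
  have "inner ui uj < -1/2"
  proof (rule pair_angle[OF i(1) j(1) i(2) j(2)])
    fix x :: 'a assume "norm x < 2"
    then show "\<not> (inner ui x \<le> - bi \<and> inner uj x \<le> - bj)" using D[OF ijk(1,2,4), of x] i(3) j(3) by simp
  qed
  moreover have "inner ui uk < -1/2"
  proof (rule pair_angle[OF i(1) k(1) i(2) k(2)])
    fix x :: 'a assume "norm x < 2"
    then show "\<not> (inner ui x \<le> - bi \<and> inner uk x \<le> - bk)" using D[OF ijk(1,3,5), of x] i(3) k(3) by simp
  qed
  moreover have "inner uj uk < -1/2"
  proof (rule pair_angle[OF j(1) k(1) j(2) k(2)])
    fix x :: 'a assume "norm x < 2"
    then show "\<not> (inner uj x \<le> - bj \<and> inner uk x \<le> - bk)" using D[OF ijk(2,3,6), of x] j(3) k(3) by simp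
  qed
  ultimately show False using three_units[OF i(1) j(1) k(1)] by simp
qed

end
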